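(* Let $(p_j)_{j\ge 0}$ be a probability distribution on $\mathbb N$ with $0<p_0+p_1<1$, probability generating function $P(z)=\sum_{j\ge0}p_jz^j$ and mean $m=P'(1)<1$, and let $G(z)=\sum_{j\ge1}g_jz^j$ be the probability generating function of the Yaglom limit of the Galton–Watson process with offspring distribution $(p_j)$. If the power series $P(z)$ has radius of convergence $r_P>1$, then the power series $G(z)$ has radius of convergence $r_G>1$.
   Context: A Galton–Watson process $\{Z_n\}$ is the Markov chain on $\mathbb N$ with $Z_n=\sum_{i=1}^{Z_{n-1}}\theta_i^{(n)}$, the $\theta_i^{(n)}$ i.i.d. with law $(p_j)$, and $0$ absorbing. For $m<1$ the Yaglom limit is the unique probability distribution $(g_j)_{j\ge1}$ with $\lim_{n\to\infty}\mathbb P(Z_n=j\mid Z_n>0,Z_0=\ell)=g_j$ for all $\ell,j\ge1$; its generating function $G$ is the unique probability generating function with $G(0)=0$ and $G(P(z))=mG(z)+1-m$ for $z\in[0,1]$. *)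

theory Defs
  imports "HOL-Analysis.Analysis"
begin

definition prob_dist :: "(nat \<Rightarrow> real) \<Rightarrow> bool" where
  "prob_dist p \<longleftrightarrow> (\<forall>j. 0 \<le> p j) \<and> p sums 1"

text \<open>Law of the sum of i i.i.d. variables with law p (i-fold convolution power):
  conv_pow p i j = P(theta_1 + ... + theta_i = j).\<close>
fun conv_pow :: "(nat \<Rightarrow> real) \<Rightarrow> nat \<Rightarrow> nat \<Rightarrow> real" where
  "conv_pow p 0 j = (if j = 0 then 1 else 0)"
| "conv_pow p (Suc i) j = (\<Sum>k\<le>j. p k * conv_pow p i (j - k))"

text \<open>One-step transition probabilities of the Galton--Watson chain:
  P(Z_n = j | Z_{n-1} = i) (state 0 is absorbing automatically).\<close>
definition gw_trans :: "(nat \<Rightarrow> real) \<Rightarrow> nat \<Rightarrow> nat \<Rightarrow> real" where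
  "gw_trans p i j = conv_pow p i j"

text \<open>n-step transition probabilities P(Z_n = j | Z_0 = l).\<close>
fun gw_step :: "(nat \<Rightarrow> real) \<Rightarrow> nat \<Rightarrow> nat \<Rightarrow> nat \<Rightarrow> real" where
  "gw_step p 0 l j = (if j = l then 1 else 0)"
| "gw_step p (Suc n) l j = (\<Sum>k. gw_step p n l k * gw_trans p k j)"

definition yaglom_limit :: "(nat \<Rightarrow> real) \<Rightarrow> (nat \<Rightarrow> real) \<Rightarrow> bool" where
  "yaglom_limit p g \<longleftrightarrow>
     prob_dist g \<and> g 0 = 0 \<and>
     (\<forall>l\<ge>1. \<forall>j\<ge>1.
        (\<lambda>n. gw_step p n l j / (1 - gw_step p n l 0)) \<longlonglongrightarrow> g j)"

end

theory Submission
  imports Defs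
begin

lemma swap_nonneg:
  fixes b :: "nat \<Rightarrow> nat \<Rightarrow> real"
  assumes nn: "\<And>k j. b k j \<ge> 0" and rows: "\<And>k. (\<lambda>j. b k j) sums S k" and tot: "S sums T"
  shows "(\<lambda>j. \<Sum>k. b k j) sums T" and "\<And>j. summable (\<lambda>k. b k j)"
proof -
  have Snn: "S k \<ge> 0" for k using sums_le[OF _ sums_zero rows[of k]] nn by blast
  have r: "((\<lambda>y. (\<lambda>(k,j). b k j) (x, y)) has_sum S x) UNIV" for x
    using sums_nonneg_imp_has_sum[OF rows[of x]] nn by simp
  have t: "(S has_sum T) UNIV" using sums_nonneg_imp_has_sum[OF tot] Snn by simp
  have sm: "(\<lambda>(k,j). b k j) summable_on Sigma UNIV (\<lambda>_. UNIV)"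
    by (rule summable_on_SigmaI[OF r]) (use t nn in \<open>auto simp: has_sum_imp_summable\<close>)
  have hs: "((\<lambda>(k,j). b k j) has_sum T) (UNIV \<times> UNIV)"
    using has_sum_SigmaI[OF r t sm] by simp
  then have hs2: "((\<lambda>(j,k). b k j) has_sum T) (UNIV \<times> UNIV)"
    using has_sum_swap[where f="\<lambda>(k,j). b k j" and S=T and A=UNIV and B=UNIV] by simp
  have col: "(\<lambda>k. b k j) summable_on UNIV" for j
    using summable_on_SigmaD1[of "\<lambda>j k. b k j" UNIV "\<lambda>_. UNIV" j] hs2
    by (auto dest: has_sum_imp_summable)
  then show sj: "summable (\<lambda>k. b k j)" for j using summable_on_imp_summable by blast
  have "((\<lambda>j. infsum (\<lambda>k. b k j) UNIV) has_sum T) UNIV"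
    using has_sum_Sigma'[where f="\<lambda>(j,k). b k j" and a=T and A=UNIV and B="\<lambda>_. UNIV" and b="\<lambda>j. infsum (\<lambda>k. b k j) UNIV"] hs2 col
    by (auto simp: has_sum_infsum)
  moreover have "infsum (\<lambda>k. b k j) UNIV = (\<Sum>k. b k j)" for j
    using col[of j] by (metis has_sum_imp_sums has_sum_infsum sums_unique)
  ultimately show "(\<lambda>j. \<Sum>k. b k j) sums T" by (simp add: has_sum_imp_sums)
qed

lemma conv_pow_nonneg: "(\<And>j. p j \<ge> 0) \<Longrightarrow> conv_pow p k j \<ge> 0"
  by (induction k arbitrary: j) (auto intro!: sum_nonneg mult_nonneg_nonneg)

lemma conv_pow_gf:
  fixes p :: "nat \<Rightarrow> real"
  assumes nn: "\<And>j. p j \<ge> 0" and x: "x \<ge> 0" and sm: "summable (\<lambda>j. p j * x^j)"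
  shows "(\<lambda>j. conv_pow p k j * x^j) sums ((\<Sum>j. p j * x^j) ^ k)"
proof (induction k)
  case 0
  have "(\<lambda>j. conv_pow p 0 j * x^j) = (\<lambda>j. if j = 0 then (\<lambda>_. 1::real) j else 0)" by auto
  then show ?case using sums_single[of 0 "\<lambda>_. 1::real"] by simp
next
  case (Suc k)
  have a: "summable (\<lambda>i. norm (p i * x^i))" using sm nn x by simp
  have b: "summable (\<lambda>i. norm (conv_pow p k i * x^i))"
    using Suc.IH conv_pow_nonneg[OF nn] x by (simp add: sums_iff)
  have "(\<lambda>j. \<Sum>i\<le>j. (p i * x^i) * (conv_pow p k (j-i) * x^(j-i))) sums
      ((\<Sum>j. p j * x^j) * (\<Sum>j. conv_pow p k j * x^j))"
    by (rule Cauchy_product_sums[OF a b])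
  moreover have "(\<Sum>i\<le>j. (p i * x^i) * (conv_pow p k (j-i) * x^(j-i))) = conv_pow p (Suc k) j * x^j" for j
  proof -
    have "(\<Sum>i\<le>j. (p i * x^i) * (conv_pow p k (j-i) * x^(j-i))) = (\<Sum>i\<le>j. p i * conv_pow p k (j-i) * x^j)"
    proof (rule sum.cong)
      fix i assume "i \<in> {..j}"
      then have "x^i * x^(j-i) = x^j" by (simp add: power_add[symmetric])
      then show "(p i * x^i) * (conv_pow p k (j-i) * x^(j-i)) = p i * conv_pow p k (j-i) * x^j"
        by (metis (no_types, lifting) mult.assoc mult.left_commute)
    qed simp
    also have "\<dots> = conv_pow p (Suc k) j * x^j" by (simp add: sum_distrib_right)
    finally show ?thesis .
  qed
  ultimately show ?case using Suc.IH by (simp add: sums_unique[symmetric] mult.commute)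
qed


lemma gw_gf:
  fixes p :: "nat \<Rightarrow> real" and s :: real
  defines "P \<equiv> \<lambda>x. \<Sum>j. p j * x^j"
  assumes nn: "\<And>j. p j \<ge> 0" and s1: "1 \<le> s"
    and smP: "\<And>x. 0 \<le> x \<Longrightarrow> x \<le> s \<Longrightarrow> summable (\<lambda>j. p j * x^j)"
    and inv: "\<And>x. 0 \<le> x \<Longrightarrow> x \<le> s \<Longrightarrow> 0 \<le> P x \<and> P x \<le> s"
  shows "(\<forall>j. gw_step p n 1 j \<ge> 0) \<and> (\<forall>x. 0 \<le> x \<and> x \<le> s \<longrightarrow> (\<lambda>j. gw_step p n 1 j * x^j) sums (P^^n) x)"
proof (induction n)
  case 0
  have "(\<lambda>j. gw_step p 0 1 j * x^j) sums x" for x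
  proof -
    have "(\<lambda>j. gw_step p 0 1 j * x^j) = (\<lambda>j. if j = 1 then (\<lambda>j. x^j) j else 0)"
      by auto
    then show ?thesis using sums_single[of 1 "\<lambda>j. x^j"] by simp
  qed
  then show ?case by simp
next
  case (Suc n)
  have IH1: "gw_step p n 1 k \<ge> 0" for k using Suc.IH by blast
  have IH2: "(\<lambda>j. gw_step p n 1 j * x^j) sums (P^^n) x" if "0 \<le> x" "x \<le> s" for x
    using Suc.IH that by blast
  have main: "(\<lambda>j. (\<Sum>k. gw_step p n 1 k * conv_pow p k j * x^j)) sums (P^^Suc n) x
     \<and> (\<forall>j. summable (\<lambda>k. gw_step p n 1 k * conv_pow p k j * x^j))" if x: "0 \<le> x" "x \<le> s" for x
  proof -
    have rows: "(\<lambda>j. gw_step p n 1 k * conv_pow p k j * x^j) sums (gw_step p n 1 k * (P x)^k)" for k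
      using sums_mult[OF conv_pow_gf[OF nn x(1) smP[OF x]], of "gw_step p n 1 k" k]
      by (simp add: P_def mult.assoc)
    have tot: "(\<lambda>k. gw_step p n 1 k * (P x)^k) sums (P^^Suc n) x"
      using IH2[of "P x"] inv[OF x] by (simp add: funpow_Suc_right del: funpow.simps)
    have nn2: "gw_step p n 1 k * conv_pow p k j * x^j \<ge> 0" for k j
      using IH1 conv_pow_nonneg[OF nn] x by simp
    show ?thesis using swap_nonneg[OF nn2 rows tot] by blast
  qed
  have eq: "gw_step p (Suc n) 1 j * x^j = (\<Sum>k. gw_step p n 1 k * conv_pow p k j * x^j)" if "0 \<le> x" "x \<le> s" for x j
  proof -
    have "summable (\<lambda>k. gw_step p n 1 k * conv_pow p k j)"
      using main[of 1] s1 by simp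
    then show ?thesis by (simp add: gw_trans_def suminf_mult2)
  qed
  have "gw_step p (Suc n) 1 j \<ge> 0" for j
  proof -
    have "summable (\<lambda>k. gw_step p n 1 k * conv_pow p k j)"
      using main[of 1] s1 by simp
    then show ?thesis using IH1 conv_pow_nonneg[OF nn]
      by (simp add: gw_trans_def suminf_nonneg)
  qed
  moreover have "(\<lambda>j. gw_step p (Suc n) 1 j * x^j) sums (P^^Suc n) x" if "0 \<le> x" "x \<le> s" for x
    using main[OF that] eq[OF that] by simp
  ultimately show ?case by blast
qed


lemma e_nonneg: "(-1::real) \<le> u \<Longrightarrow> 0 \<le> (1+u)^j - 1 - real j * u"
  using Bernoulli_inequality[of u j] by simp

lemma e_rec: "(1+u)^(Suc j) - 1 - real (Suc j) * u = (1+u) * ((1+u)^j - 1 - real j * u) + real j * u^2"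
  for u :: real by (simp add: algebra_simps power2_eq_square)

lemma f_rec: "(1-y)^(Suc j) - 1 + real (Suc j) * y = (1-y) * ((1-y)^j - 1 + real j * y) + real j * y^2"
  for y :: real by (simp add: algebra_simps power2_eq_square)

lemma e_le:
  fixes u u0 :: real
  assumes "0 \<le> u" "u \<le> u0"
  shows "((1+u)^j - 1 - real j * u) * u0^2 \<le> ((1+u0)^j - 1 - real j * u0) * u^2"
proof (induction j)
  case 0 then show ?case by simp
next
  case (Suc j)
  let ?a = "(1+u)^j - 1 - real j * u" and ?b = "(1+u0)^j - 1 - real j * u0"
  have a0: "?a \<ge> 0" "?b \<ge> 0" using e_nonneg[of u j] e_nonneg[of u0 j] assms by auto
  have "(1+u) * (?a * u0^2) \<le> (1+u0) * (?b * u^2)"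
    by (rule mult_mono) (use Suc.IH assms a0 in auto)
  moreover have "real j * u^2 * u0^2 = real j * u0^2 * u^2" by simp
  ultimately show ?case unfolding e_rec by (simp add: algebra_simps)
qed

lemma f_nonneg: "0 \<le> y \<Longrightarrow> y \<le> 1 \<Longrightarrow> 0 \<le> (1-y)^j - 1 + real j * y"
  for y :: real using Bernoulli_inequality[of "-y" j] by simp

lemma f_le:
  fixes y u0 :: real
  assumes "0 \<le> y" "y \<le> 1" "0 \<le> u0"
  shows "((1-y)^j - 1 + real j * y) * u0^2 \<le> ((1+u0)^j - 1 - real j * u0) * y^2"
proof (induction j)
  case 0 then show ?case by simp
next
  case (Suc j)
  let ?a = "(1-y)^j - 1 + real j * y" and ?b = "(1+u0)^j - 1 - real j * u0"
  have a0: "?a \<ge> 0" "?b \<ge> 0" using f_nonneg[of y j] e_nonneg[of u0 j] assms by auto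
  have "(1-y) * (?a * u0^2) \<le> ?a * u0^2" using a0 assms by (simp add: mult_le_cancel_right1 mult_left_le_one_le)
  also have "\<dots> \<le> ?b * y^2" by (rule Suc.IH)
  also have "\<dots> \<le> (1+u0) * (?b * y^2)" using a0 assms mult_right_mono[of 1 "1+u0" "?b * y^2"] by simp
  finally have "(1-y) * (?a * u0^2) \<le> (1+u0) * (?b * y^2)" .
  then show ?case unfolding e_rec f_rec by (simp add: algebra_simps)
qed

lemma one_minus_pow:
  fixes y :: real assumes "0 \<le> y" "y \<le> 1" shows "y * (1 - 0^j) \<le> 1 - (1-y)^j"
proof (cases j)
  case (Suc k)
  have "(1-y)^Suc k \<le> (1-y)" using power_le_one[of "1-y" k] \<open>0 \<le> y\<close> \<open>y \<le> 1\<close>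
    by (simp add: mult_left_le)
  then show ?thesis using Suc by simp
qed simp


theorem theorem2p3:
  fixes p g :: "nat \<Rightarrow> real"
  assumes "prob_dist p"
    and "0 < p 0 + p 1" and "p 0 + p 1 < 1"
    and "summable (\<lambda>j. real j * p j)"
    and "(\<Sum>j. real j * p j) < 1"
    and "yaglom_limit p g"
    and "conv_radius p > 1"
  shows "conv_radius g > 1"
proof -
  have pnn: "\<And>j. p j \<ge> 0" and psum: "p sums 1" using assms(1) by (auto simp: prob_dist_def)
  define m where "m = (\<Sum>j. real j * p j)"
  have msum: "(\<lambda>j. real j * p j) sums m" using assms(4) by (simp add: m_def summable_sums)
  have m1: "m < 1" using assms(5) m_def by simp
  define P where "P = (\<lambda>x::real. \<Sum>j. p j * x^j)"
  obtain r0 where r0: "1 < ereal r0" "ereal r0 < conv_radius p" using ereal_dense2[OF assms(7)] by blast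
  have r01: "1 < r0" using r0(1) by simp
  define u0 where "u0 = r0 - 1"
  have u0: "u0 > 0" using r01 u0_def by simp
  have smr0: "summable (\<lambda>j. p j * r0^j)"
    using summable_in_conv_radius[of r0 p] r0 r01 by simp
  have smP: "summable (\<lambda>j. p j * x^j)" if "0 \<le> x" "x \<le> r0" for x
  proof (rule summable_comparison_test'[OF smr0, of 0])
    fix j :: nat
    have "p j * x^j \<le> p j * r0^j" using that pnn[of j] by (intro mult_left_mono power_mono) auto
    then show "norm (p j * x^j) \<le> p j * r0^j" using that pnn[of j] by simp
  qed
  have Psums: "(\<lambda>j. p j * x^j) sums P x" if "0 \<le> x" "x \<le> r0" for x
    using smP[OF that] by (simp add: P_def summable_sums)
  have Pnn: "P x \<ge> 0" if "0 \<le> x" "x \<le> r0" for x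
    using smP[OF that] pnn that unfolding P_def by (intro suminf_nonneg) auto
  have P0: "P 0 = p 0" unfolding P_def by simp
  define E where "E j = (1+u0)^j - 1 - real j * u0" for j
  define K where "K = P r0 - 1 - u0 * m"
  have Ksums: "(\<lambda>j. p j * E j) sums K"
  proof -
    have "(\<lambda>j. p j * r0^j - p j - u0 * (real j * p j)) sums (P r0 - 1 - u0 * m)"
      by (intro sums_diff sums_mult Psums psum msum) (use r01 in auto)
    moreover have "p j * r0^j - p j - u0 * (real j * p j) = p j * E j" for j
      by (simp add: E_def u0_def algebra_simps)
    ultimately show ?thesis by (simp add: K_def)
  qed
  have Enn: "E j \<ge> 0" for j using e_nonneg[of u0 j] u0 by (simp add: E_def)
  have K0: "K \<ge> 0" using sums_le[OF _ sums_zero Ksums] pnn Enn by simp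
  define D where "D = K / u0^2"
  have D0: "D \<ge> 0" using K0 u0 by (simp add: D_def)
  have ident: "(\<lambda>j. p j * (x^j - 1 - real j * (x - 1))) sums (P x - 1 - m * (x-1))"
    if "0 \<le> x" "x \<le> r0" for x
  proof -
    have "(\<lambda>j. p j * x^j - p j - (x - 1) * (real j * p j)) sums (P x - 1 - (x-1) * m)"
      by (intro sums_diff sums_mult Psums psum msum) (use that in auto)
    moreover have "p j * x^j - p j - (x - 1) * (real j * p j) = p j * (x^j - 1 - real j * (x - 1))" for j
      by (simp add: algebra_simps)
    ultimately show ?thesis by (simp add: mult.commute)
  qed
  have DK: "(\<lambda>j. p j * E j * (t^2 / u0^2)) sums (D * t^2)" for t
    using sums_mult2[OF Ksums, of "t^2/u0^2"] by (simp add: D_def)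
  have factA: "0 \<le> P (1+u) - 1 - m * u \<and> P (1+u) - 1 - m * u \<le> D * u^2" if "0 \<le> u" "u \<le> u0" for u
  proof -
    have id: "(\<lambda>j. p j * ((1+u)^j - 1 - real j * u)) sums (P (1+u) - 1 - m * u)"
      using ident[of "1+u"] that u0_def by simp
    have "0 \<le> P (1+u) - 1 - m * u"
      using sums_le[OF _ sums_zero id] pnn e_nonneg[of u] that by simp
    moreover have "P (1+u) - 1 - m * u \<le> D * u^2"
    proof (rule sums_le[OF _ id DK])
      fix j
      have "((1+u)^j - 1 - real j * u) * u0^2 \<le> E j * u^2" using e_le[OF that, of j] by (simp add: E_def)
      then have "((1+u)^j - 1 - real j * u) \<le> E j * (u^2 / u0^2)" using u0 by (simp add: field_simps)
      from mult_left_mono[OF this pnn[of j]]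
      show "p j * ((1+u)^j - 1 - real j * u) \<le> p j * E j * (u^2 / u0^2)"
        by (simp add: mult.assoc)
    qed
    ultimately show ?thesis by blast
  qed
  have factB: "0 \<le> P (1-y) - 1 + m * y \<and> P (1-y) - 1 + m * y \<le> D * y^2" if "0 \<le> y" "y \<le> 1" for y
  proof -
    have id: "(\<lambda>j. p j * ((1-y)^j - 1 + real j * y)) sums (P (1-y) - 1 + m * y)"
      using ident[of "1-y"] that r01 by simp
    have "0 \<le> P (1-y) - 1 + m * y"
      using sums_le[OF _ sums_zero id] pnn f_nonneg[OF that] by simp
    moreover have "P (1-y) - 1 + m * y \<le> D * y^2"
    proof (rule sums_le[OF _ id DK])
      fix j
      have "((1-y)^j - 1 + real j * y) * u0^2 \<le> E j * y^2" using f_le[OF that, of u0] u0 by (simp add: E_def)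
      then have "((1-y)^j - 1 + real j * y) \<le> E j * (y^2 / u0^2)" using u0 by (simp add: field_simps)
      from mult_left_mono[OF this pnn[of j]]
      show "p j * ((1-y)^j - 1 + real j * y) \<le> p j * E j * (y^2 / u0^2)"
        by (simp add: mult.assoc)
    qed
    ultimately show ?thesis by blast
  qed
  have factC: "(1 - p 0) * y \<le> 1 - P (1-y)" if "0 \<le> y" "y \<le> 1" for y
  proof -
    have s1: "(\<lambda>j. p j - p j * (1-y)^j) sums (1 - P (1-y))"
      by (intro sums_diff psum Psums) (use that r01 in auto)
    have s2: "(\<lambda>j. y * (p j - p j * 0^j)) sums (y * (1 - p 0))"
      by (intro sums_mult sums_diff psum powser_sums_zero)
    have "y * (1 - p 0) \<le> 1 - P (1-y)"
    proof (rule sums_le[OF _ s2 s1])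
      fix j
      have "p j * (y * (1 - 0^j)) \<le> p j * (1 - (1-y)^j)"
        using one_minus_pow[OF that, of j] pnn[of j] by (rule mult_left_mono)
      then show "y * (p j - p j * 0^j) \<le> p j - p j * (1-y)^j" by (simp add: algebra_simps)
    qed
    then show ?thesis by (simp add: mult.commute)
  qed
  have p01: "p 0 < 1" using assms(3) pnn[of 1] by simp
  have mge: "1 - p 0 \<le> m"
  proof (rule sums_le[OF _ _ msum])
    show "(\<lambda>j. p j - p j * 0^j) sums (1 - p 0)" by (intro sums_diff psum powser_sums_zero)
    fix j show "p j - p j * 0^j \<le> real j * p j" using pnn[of j] by (cases j) (auto simp: algebra_simps)
  qed
  have m0: "m > 0" using mge p01 by simp

  define \<beta> where "\<beta> = (1 + m) / 2"
  define \<delta> where "\<delta> = min u0 ((1-m)*m/(4*(D+1)))"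
  have \<delta>0: "\<delta> > 0" using u0 m0 m1 D0 by (simp add: \<delta>_def)
  have \<delta>u0: "\<delta> \<le> u0" by (simp add: \<delta>_def)
  have d2: "4*D*\<delta> \<le> m*(1-m)"
  proof -
    have "\<delta> \<le> (1-m)*m/(4*(D+1))" by (simp add: \<delta>_def)
    then have "4*(D+1)*\<delta> \<le> (1-m)*m" using D0 by (simp add: field_simps)
    moreover have "4*D*\<delta> \<le> 4*(D+1)*\<delta>" using \<delta>0 by simp
    ultimately show ?thesis by (simp add: algebra_simps)
  qed
  have d1: "D*\<delta> \<le> (1-m)/2"
  proof -
    have "m*(1-m) \<le> 1-m" using m0 m1 by (simp add: mult_le_cancel_right1)
    moreover have "0 \<le> D * \<delta>" using D0 \<delta>0 by simp
    moreover have "4*(D*\<delta>) \<le> m*(1-m)" using d2 by (simp add: mult.assoc)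
    ultimately show ?thesis by argo
  qed
  define s where "s = 1 + \<delta>"
  have s1: "1 < s" and sr0: "s \<le> r0" using \<delta>0 \<delta>u0 u0_def by (auto simp: s_def)
  have inv1: "0 \<le> P x \<and> P x \<le> 1" if "0 \<le> x" "x \<le> 1" for x
  proof -
    have "0 \<le> (1 - p 0) * (1-x)" using p01 that by simp
    then show ?thesis using Pnn[of x] factC[of "1-x"] that r01 by simp
  qed
  have invA: "1 \<le> P x \<and> P x - 1 \<le> \<beta> * (x - 1)" if "1 \<le> x" "x \<le> s" for x
  proof -
    define u where "u = x - 1"
    have u: "0 \<le> u" "u \<le> \<delta>" using that by (auto simp: u_def s_def)
    have x: "x = 1 + u" by (simp add: u_def)
    have A: "0 \<le> P x - 1 - m * u" "P x - 1 - m * u \<le> D * u^2" using factA[of u] u \<delta>u0 x by auto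
    have "D * u \<le> D * \<delta>" using u D0 by (intro mult_left_mono) auto
    then have "D * u * u \<le> D * \<delta> * u" using u by (intro mult_right_mono) auto
    then have "D * u^2 \<le> D * \<delta> * u" by (simp add: power2_eq_square mult.assoc)
    also have "\<dots> \<le> (1-m)/2 * u" using mult_right_mono[OF d1 u(1)] .
    finally have "P x - 1 \<le> \<beta> * u" using A by (simp add: \<beta>_def field_simps)
    moreover have "1 \<le> P x" using A m0 u by (smt (verit) mult_nonneg_nonneg)
    ultimately show ?thesis by (simp add: u_def)
  qed
  have inv: "0 \<le> P x \<and> P x \<le> s" if "0 \<le> x" "x \<le> s" for x
  proof (cases "x \<le> 1")
    case True then show ?thesis using inv1 that s1 by force
  next
    case False
    then have "1 \<le> P x \<and> P x - 1 \<le> \<beta> * (x - 1)" using invA that by simp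
    moreover have "\<beta> * (x - 1) \<le> x - 1"
      using mult_right_mono[of \<beta> 1 "x-1"] False m1 by (simp add: \<beta>_def)
    ultimately show ?thesis using that by simp
  qed
  have GW: "(\<forall>j. gw_step p n 1 j \<ge> 0) \<and> (\<forall>x. 0 \<le> x \<and> x \<le> s \<longrightarrow> (\<lambda>j. gw_step p n 1 j * x^j) sums (P^^n) x)" for n
    using gw_gf[of p s n] pnn s1 smP sr0 inv unfolding P_def by auto

  define y where "y n = 1 - (P^^n) 0" for n
  define u where "u n = (P^^n) s - 1" for n
  have y01: "0 \<le> y n \<and> y n \<le> 1" for n
  proof -
    have "0 \<le> (P^^n) 0 \<and> (P^^n) 0 \<le> 1"
      by (induction n) (use inv1 in auto)
    then show ?thesis by (simp add: y_def)
  qed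
  have yrec: "y (Suc n) = 1 - P (1 - y n)" for n by (simp add: y_def)
  have ypos: "(1 - p 0)^n \<le> y n" for n
  proof (induction n)
    case 0 then show ?case by (simp add: y_def)
  next
    case (Suc n)
    have "(1 - p 0) * (1 - p 0)^n \<le> (1 - p 0) * y n" using Suc.IH p01 by (intro mult_left_mono) auto
    also have "\<dots> \<le> y (Suc n)" using factC[of "y n"] y01[of n] yrec[of n] by simp
    finally show ?case by simp
  qed
  have ygt: "y n > 0" for n using ypos[of n] p01 by (smt (verit) zero_less_power)
  have yle: "y n \<le> m^n" for n
  proof (induction n)
    case 0 then show ?case using y01[of 0] by simp
  next
    case (Suc n)
    have "y (Suc n) \<le> m * y n" using factB[of "y n"] y01[of n] yrec[of n] by simp
    also have "\<dots> \<le> m * m^n" using Suc.IH m0 by (intro mult_left_mono) auto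
    finally show ?case by simp
  qed
  have ylow: "m * y n - D * (y n)^2 \<le> y (Suc n)" for n
    using factB[of "y n"] y01[of n] yrec[of n] by simp
  have u0d: "0 \<le> u n \<and> u n \<le> \<delta>" for n
  proof -
    have "1 \<le> (P^^n) s \<and> (P^^n) s \<le> s"
    proof (induction n)
      case 0 then show ?case using s1 by simp
    next
      case (Suc n)
      then show ?case using invA[of "(P^^n) s"] inv[of "(P^^n) s"] by simp
    qed
    then show ?thesis by (simp add: u_def s_def)
  qed
  have urec: "u (Suc n) \<le> m * u n + D * (u n)^2 \<and> u (Suc n) \<le> \<beta> * u n" for n
  proof -
    have "1 \<le> (P^^n) s" using u0d[of n] by (simp add: u_def)
    moreover have "(P^^n) s \<le> s" using u0d[of n] by (simp add: u_def s_def)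
    ultimately have "P ((P^^n) s) - 1 \<le> \<beta> * ((P^^n) s - 1)" using invA by blast
    moreover have "P (1 + u n) - 1 - m * u n \<le> D * (u n)^2" using factA[of "u n"] u0d[of n] \<delta>u0 by auto
    ultimately show ?thesis by (simp add: u_def)
  qed
  have ubeta: "u n \<le> \<beta>^n * \<delta>" for n
  proof (induction n)
    case 0 then show ?case using u0d[of 0] by simp
  next
    case (Suc n)
    have "u (Suc n) \<le> \<beta> * u n" using urec by blast
    also have "\<dots> \<le> \<beta> * (\<beta>^n * \<delta>)" using Suc.IH m0 by (intro mult_left_mono) (auto simp: \<beta>_def)
    finally show ?case by (simp add: mult.assoc)
  qed

  have mpos_frac: "0 < m*(1-m)/(2*(D+1))" using m0 m1 D0 by simp
  obtain N where N: "m^N < m*(1-m)/(2*(D+1))" using real_arch_pow_inv[OF mpos_frac m1] by blast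
  have DmN: "D * m^N \<le> m*(1-m)/2"
  proof -
    have "D * m^N \<le> (D+1) * m^N" using m0 by simp
    also have "\<dots> \<le> (D+1) * (m*(1-m)/(2*(D+1)))" using N D0 by (intro mult_left_mono) auto
    also have "\<dots> = m*(1-m)/2" using D0 by (simp add: field_simps)
    finally show ?thesis .
  qed
  have gsum: "(\<Sum>i<k. x^i) \<le> 1/(1-x)" if "0 \<le> x" "x < 1" for x :: real and k
  proof -
    have "(\<Sum>i<k. x^i) = (1 - x^k)/(1-x)" using that by (simp add: sum_gp_strict)
    also have "\<dots> \<le> 1/(1-x)" using that by (intro divide_right_mono) auto
    finally show ?thesis .
  qed
  have gsum0: "0 \<le> (\<Sum>i<k. x^i)" if "0 \<le> x" for x :: real and k
    using that by (intro sum_nonneg) auto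
  define S where "S k = (D/m) * (\<Sum>i<k. m^(N+i))" for k
  have S0: "0 \<le> S k" for k using D0 m0 gsum0[of m] by (simp add: S_def power_add sum_distrib_left[symmetric])
  have Sle: "S k \<le> 1/2" for k
  proof -
    have "S k = D * m^N * (\<Sum>i<k. m^i) / m" by (simp add: S_def power_add sum_distrib_left[symmetric])
    also have "\<dots> \<le> D * m^N * (1/(1-m)) / m"
      using gsum[of m k] m0 m1 D0 by (intro divide_right_mono mult_left_mono) auto
    also have "\<dots> = D * m^N / (m*(1-m))" by simp
    also have "\<dots> \<le> (m*(1-m)/2) / (m*(1-m))" using DmN m0 m1 by (intro divide_right_mono) auto
    also have "\<dots> = 1/2" using m0 m1 by simp
    finally show ?thesis .
  qed
  have Ssuc: "S (Suc k) = S k + (D/m) * m^(N+k)" for k by (simp add: S_def algebra_simps)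
  have L: "y N * m^k * (1 - S k) \<le> y (N+k)" for k
  proof (induction k)
    case 0 then show ?case by (simp add: S_def)
  next
    case (Suc k)
    define Y where "Y = y (N+k)"
    define a where "a = (D/m) * m^(N+k)"
    have a0: "0 \<le> a" using D0 m0 by (simp add: a_def)
    have Sa: "S (Suc k) = S k + a" using Ssuc[of k] by (simp add: a_def)
    have a1: "a \<le> 1" using Sle[of "Suc k"] S0[of k] Sa by linarith
    have Y0: "0 \<le> Y" and Yle: "Y \<le> m^(N+k)" using y01 yle by (auto simp: Y_def)
    have h1: "m*Y - D*Y^2 \<le> y (N + Suc k)" using ylow[of "N+k"] by (simp add: Y_def)
    have "D*Y*Y \<le> D*Y*m^(N+k)" using Yle Y0 D0 by (intro mult_left_mono) auto
    moreover have "m*a = D*m^(N+k)" using m0 by (simp add: a_def)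
    ultimately have h2: "m*Y*(1-a) \<le> m*Y - D*Y^2"
      by (simp add: algebra_simps power2_eq_square)
    have h3: "m * (y N * m^k * (1 - S k)) * (1-a) \<le> m*Y*(1-a)"
      using Suc.IH a1 m0 by (intro mult_right_mono mult_left_mono) (auto simp: Y_def)
    have "1 - S (Suc k) \<le> (1 - S k) * (1 - a)"
      using Sa S0[of k] a0 mult_nonneg_nonneg[OF S0[of k] a0] by (simp add: algebra_simps)
    then have h4: "y N * m^Suc k * (1 - S (Suc k)) \<le> y N * m^Suc k * ((1 - S k) * (1 - a))"
      using y01[of N] m0 by (intro mult_left_mono) auto
    have "y N * m^Suc k * ((1 - S k) * (1 - a)) = m * (y N * m^k * (1 - S k)) * (1-a)"
      by (simp add: algebra_simps)
    then show ?case using h1 h2 h3 h4 by linarith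
  qed
  have Lfin: "y N * m^k / 2 \<le> y (N+k)" for k
  proof -
    have "y N * m^k * (1/2) \<le> y N * m^k * (1 - S k)"
      using Sle[of k] y01[of N] m0 by (intro mult_left_mono) auto
    then show ?thesis using L[of k] by simp
  qed

  have b0: "0 \<le> \<beta>" "\<beta> < 1" using m0 m1 by (auto simp: \<beta>_def)
  define T where "T n = (D/m) * \<delta> * (\<Sum>i<n. \<beta>^i)" for n
  have T0: "0 \<le> T n" for n using D0 m0 \<delta>0 gsum0[OF b0(1)] by (simp add: T_def)
  have Tle: "T n \<le> 1/2" for n
  proof -
    have "T n \<le> (D/m) * \<delta> * (1/(1-\<beta>))"
      unfolding T_def using gsum[OF b0, of n] D0 m0 \<delta>0 by (intro mult_left_mono) auto
    also have "\<dots> = 2*D*\<delta> / (m*(1-m))" using m0 m1 by (simp add: \<beta>_def field_simps)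
    also have "\<dots> \<le> (m*(1-m)/2) / (m*(1-m))" using d2 m0 m1 by (intro divide_right_mono) auto
    also have "\<dots> = 1/2" using m0 m1 by simp
    finally show ?thesis .
  qed
  have U: "u n * (1 - T n) \<le> \<delta> * m^n" for n
  proof (induction n)
    case 0 then show ?case using u0d[of 0] by (simp add: T_def)
  next
    case (Suc n)
    define V where "V = u n"
    define b where "b = (D/m) * \<delta> * \<beta>^n"
    have Tb: "T (Suc n) = T n + b" by (simp add: T_def b_def algebra_simps)
    have bnn: "0 \<le> b" using D0 m0 \<delta>0 b0 by (simp add: b_def)
    have V0: "0 \<le> V" and Vle: "V \<le> \<beta>^n * \<delta>" using u0d ubeta by (auto simp: V_def)
    have "D*V*V \<le> D*V*(\<beta>^n * \<delta>)" using Vle V0 D0 by (intro mult_left_mono) auto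
    moreover have "m*b = D*(\<beta>^n*\<delta>)" using m0 by (simp add: b_def)
    moreover have "m*V*(1+b) = m*V + V*(m*b)" by (simp add: algebra_simps)
    moreover have "u (Suc n) \<le> m*V + D*V*V" using urec[of n] by (simp add: V_def power2_eq_square mult.assoc)
    ultimately have h1: "u (Suc n) \<le> m*V*(1+b)" by (simp add: algebra_simps)
    have h2: "u (Suc n) * (1 - T (Suc n)) \<le> m*V*(1+b) * (1 - T n - b)"
    proof -
      have eq: "1 - T n - b = 1 - T (Suc n)" using Tb by simp
      have nn: "0 \<le> 1 - T (Suc n)" using Tle[of "Suc n"] by simp
      show ?thesis unfolding eq by (rule mult_right_mono[OF h1 nn])
    qed
    have "(1+b) * (1 - T n - b) \<le> 1 - T n"
      using bnn T0[of n] mult_nonneg_nonneg[OF bnn T0[of n]] by (simp add: algebra_simps power2_eq_square)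
    then have h3: "m*V*((1+b) * (1 - T n - b)) \<le> m*V*(1 - T n)"
      using m0 V0 by (intro mult_left_mono) auto
    have h4: "m*V*(1 - T n) \<le> m * (\<delta> * m^n)" using Suc.IH m0 by (simp add: V_def mult.assoc)
    show ?case using h2 h3 h4 Tb by (simp add: mult.assoc algebra_simps)
  qed
  have Ufin: "u n \<le> 2 * \<delta> * m^n" for n
  proof -
    have "u n * (1/2) \<le> u n * (1 - T n)" using Tle[of n] u0d[of n] by (intro mult_left_mono) auto
    then show ?thesis using U[of n] by simp
  qed
  define B where "B = 1 + 4 * \<delta> * m^N / y N"
  have ratio: "(u n + y n) / y n \<le> B" if nN: "N \<le> n" for n
  proof -
    obtain k where n: "n = N + k" using le_Suc_ex[OF nN] by blast
    have yNk: "y N * m^k / 2 \<le> y n" unfolding n by (rule Lfin)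
    have pos: "0 < y N * m^k / 2" using ygt[of N] m0 by simp
    have nn: "0 \<le> 2 * \<delta> * m^n" using \<delta>0 m0 by simp
    have "u n / y n \<le> (2 * \<delta> * m^n) / (y N * m^k / 2)"
      by (rule frac_le[OF nn Ufin[of n] pos yNk])
    also have "\<dots> = 4 * \<delta> * m^N / y N"
    proof -
      have mk: "m^k > 0" using m0 by simp
      have yN: "y N > 0" using ygt by simp
      have "m^n = m^N * m^k" by (simp add: n power_add)
      then show ?thesis using mk yN m0 by (simp add: field_simps)
    qed
    finally have "u n / y n \<le> 4 * \<delta> * m^N / y N" .
    moreover have "(u n + y n) / y n = 1 + u n / y n" using ygt[of n] by (simp add: add_divide_distrib)
    ultimately show ?thesis by (simp add: B_def)
  qed
  have gw0: "gw_step p n 1 0 = (P^^n) 0" for n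
  proof -
    have "(\<lambda>j. gw_step p n 1 j * 0^j) sums (P^^n) 0" using conjunct2[OF GW[of n], rule_format, of 0] s1 by simp
    then show ?thesis by simp
  qed
  have gwn: "gw_step p n 1 j \<ge> 0" for n j using GW by blast
  have gws: "(\<lambda>j. gw_step p n 1 j * s^j) sums (P^^n) s" for n using conjunct2[OF GW[of n], rule_format, of s] s1 by simp
  have gnn: "\<And>j. g j \<ge> 0" and g0: "g 0 = 0"
    and glim: "\<And>j. j \<ge> 1 \<Longrightarrow> (\<lambda>n. gw_step p n 1 j / (1 - gw_step p n 1 0)) \<longlonglongrightarrow> g j"
    using assms(6) by (auto simp: yaglom_limit_def prob_dist_def)
  define h where "h n j = (if j = 0 then 0 else gw_step p n 1 j / (1 - gw_step p n 1 0) * s^j)" for n j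
  have hlim: "(\<lambda>n. h n j) \<longlonglongrightarrow> g j * s^j" for j
  proof (cases "j = 0")
    case True then show ?thesis by (simp add: h_def g0)
  next
    case False
    then show ?thesis unfolding h_def using tendsto_mult_right[OF glim[of j]] by simp
  qed
  have hbound: "(\<Sum>j\<le>J. h n j) \<le> B" if nN: "N \<le> n" for n J
  proof -
    define q where "q j = (if j = 0 then 0 else gw_step p n 1 j * s^j)" for j
    have qs: "q sums ((P^^n) s - gw_step p n 1 0)"
    proof -
      have "(\<lambda>j. gw_step p n 1 j * s^j - (if j = 0 then gw_step p n 1 j * s^j else 0)) sums
          ((P^^n) s - gw_step p n 1 0 * s^0)"
        by (intro sums_diff gws sums_single)
      moreover have "(\<lambda>j. gw_step p n 1 j * s^j - (if j = 0 then gw_step p n 1 j * s^j else 0)) = q"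
        by (auto simp: q_def)
      ultimately show ?thesis by simp
    qed
    have qnn: "0 \<le> q j" for j using gwn s1 by (simp add: q_def)
    have "(\<Sum>j\<le>J. q j) \<le> (P^^n) s - gw_step p n 1 0"
      using sum_le_suminf[of q "{..J}"] qs qnn by (auto simp: sums_iff)
    also have "\<dots> = u n + y n" using gw0[of n] by (simp add: u_def y_def)
    finally have qle: "(\<Sum>j\<le>J. q j) \<le> u n + y n" .
    have "(\<Sum>j\<le>J. h n j) = (\<Sum>j\<le>J. q j) / y n"
      unfolding sum_divide_distrib by (intro sum.cong) (use gw0[of n] in \<open>auto simp: h_def q_def y_def\<close>)
    also have "\<dots> \<le> (u n + y n) / y n" using qle ygt[of n] by (intro divide_right_mono) auto
    also have "\<dots> \<le> B" by (rule ratio[OF nN])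
    finally show ?thesis .
  qed
  have gbound: "(\<Sum>j\<le>J. g j * s^j) \<le> B" for J
  proof (rule LIMSEQ_le_const2)
    show "(\<lambda>n. \<Sum>j\<le>J. h n j) \<longlonglongrightarrow> (\<Sum>j\<le>J. g j * s^j)" by (intro tendsto_sum hlim)
    show "\<exists>N'. \<forall>n\<ge>N'. (\<Sum>j\<le>J. h n j) \<le> B" using hbound by blast
  qed
  have "summable (\<lambda>j. g j * s^j)"
    by (rule bounded_imp_summable[OF _ gbound]) (use gnn s1 in auto)
  then have "ereal (norm s) \<le> conv_radius g" by (rule conv_radius_geI)
  then show ?thesis using s1 by (simp add: less_le_trans[of 1 "ereal s"])
qed
end
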